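(* Let $\mathbb X=\mathbb X^1\times\mathbb X^2$, let $S\colon\mathbb X^1\rightrightarrows\mathbb X^2$ have closed graph, let $\Omega\subset\mathbb X^1$ be closed, and define $\Phi\colon\mathbb X\rightrightarrows\mathbb X^1\times\mathbb X^2$ by $\Phi(x):=(\Omega-x^1,\,S(x^1)-x^2)$ for $x=(x^1,x^2)$. Fix $(\bar x,0)\in\operatorname{gph}\Phi$ and $u=(u^1,u^2)\in\mathbb S_{\mathbb X}$. Write $y=(y^1,y^2)$ for elements of $\mathbb X^1\times\mathbb X^2$. (i) Suppose there is no nonzero $\lambda\in D^*S((\bar x^1,\bar x^2);(u^1,u^2))(0)\cap(-\mathcal N_\Omega(\bar x^1;u^1))$ for which there exist sequences $\{(x_k,y_k)\}\subset\operatorname{gph}\Phi$ with $x_k\ne\bar x$, $\{\lambda_k\},\{\eta_k\}\subset\mathbb X^1$, $\{\mu_k\}\subset\mathbb X^2$ with $x_k\to\bar x$, $y_k\to0$, $\lambda_k\to\lambda$, $\mu_k\to0$, $\eta_k\to0$, $(x_k-\bar x)/\|x_k-\bar x\|\to u$, $y_k/\|x_k-\bar x\|\to0$, and, for all $k$, $\eta_k+\lambda_k\in\widehat D^*S(x_k^1,x_k^2+y_k^2)(\mu_k)$, $-\lambda_k\in\widehat{\mathcal N}_\Omega(x_k^1+y_k^1)$, and $\langle\lambda,y_k^1\rangle>0$. Then $\Phi$ is pseudo-normal at $(\bar x,0)$ in direction $u$. (ii) Let $\mathcal E^j=\{e^j_1,\dots,e^j_{m_j}\}$ be an orthonormal basis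 of $\mathbb X^j$, $j=1,2$. Suppose there is no nonzero $\lambda$ as in (i) for which there exist sequences as in (i) satisfying the same convergences and, for all $k$ and $i\in\{1,\dots,m_1\}$, $\eta_k+\lambda_k\in\widehat D^*S(x_k^1,x_k^2+y_k^2)(\mu_k)$, $-\lambda_k\in\widehat{\mathcal N}_\Omega(x_k^1+y_k^1)$, and $\langle\lambda,e^1_i\rangle\langle y_k^1,e^1_i\rangle>0$ whenever $\langle\lambda,e^1_i\rangle\ne0$. Then $\Phi$ is quasi-normal at $(\bar x,0)$ in direction $u$ w.r.t. the orthonormal basis $\mathcal E^1\times\mathcal E^2$ of $\mathbb X$ (i.e. $\{(e^1_i,0)\}\cup\{(0,e^2_j)\}$).
   Context: $\widehat{\mathcal N}_\Omega$ regular normal cone; $\mathcal N_\Omega(\bar x^1;u^1)$ directional limiting normal cone (limits of $\eta_k\in\widehat{\mathcal N}_\Omega(\bar x^1+t_kw_k)$, $w_k\to u^1$, $t_k\searrow0$). $\widehat D^*S(x^1,x^2)(\mu)=\{\xi\mid(\xi,-\mu)\in\widehat{\mathcal N}_{\operatorname{gph}S}(x^1,x^2)\}$; $D^*S((\bar x^1,\bar x^2);(u^1,u^2))(\mu)=\{\xi\mid(\xi,-\mu)\in\mathcal N_{\operatorname{gph}S}((\bar x^1,\bar x^2);(u^1,u^2))\}$. Directional pseudo-/quasi-normality of a closed-graph map $\Phi\colon\mathbb X\rightrightarrows\mathbb Y$ at $(\bar x,\bar y)$ in direction $u$: there is no nonzero $\lambda$ with $0\in D^*\Phi((\bar x,\bar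 y);(u,0))(\lambda)$ for which there exist $\{(x_k,y_k)\}\subset\operatorname{gph}\Phi$, $x_k\ne\bar x$, $\{\lambda_k\}\subset\mathbb Y$, $\{\eta_k\}\subset\mathbb X$ with $x_k\to\bar x$, $y_k\to\bar y$, $\lambda_k\to\lambda$, $\eta_k\to0$, $(x_k-\bar x)/\|x_k-\bar x\|\to u$, $(y_k-\bar y)/\|x_k-\bar x\|\to0$, $\eta_k\in\widehat D^*\Phi(x_k,y_k)(\lambda_k)$ for all $k$, and (pseudo) $\langle\lambda,y_k-\bar y\rangle>0$ for all $k$, resp. (quasi, w.r.t. orthonormal basis $\{e_i\}$ of $\mathbb Y$) $\langle\lambda,e_i\rangle\langle y_k-\bar y,e_i\rangle>0$ whenever $\langle\lambda,e_i\rangle\ne0$. *)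

theory Defs
  imports "HOL-Analysis.Analysis"
begin

definition gph :: "('x \<Rightarrow> 'y set) \<Rightarrow> ('x \<times> 'y) set" where
  "gph F = {(x, y). y \<in> F x}"

definition reg_normal :: "'a::real_inner set \<Rightarrow> 'a \<Rightarrow> 'a set" where
  "reg_normal \<Omega> x =
     (if x \<in> \<Omega> then
        {v. \<forall>\<epsilon>>0. \<exists>\<delta>>0. \<forall>x'\<in>\<Omega>. norm (x' - x) < \<delta> \<longrightarrow> inner v (x' - x) \<le> \<epsilon> * norm (x' - x)}
      else {})"

definition dir_normal :: "'a::real_inner set \<Rightarrow> 'a \<Rightarrow> 'a \<Rightarrow> 'a set" where
  "dir_normal \<Omega> x u =
     {\<eta>. \<exists>t w \<eta>s. (\<forall>k. t k > 0) \<and> t \<longlonglongrightarrow> 0 \<and> w \<longlonglongrightarrow> u \<and> \<eta>s \<longlonglongrightarrow> \<eta> \<and>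
            (\<forall>k. \<eta>s k \<in> reg_normal \<Omega> (x + t k *\<^sub>R w k))}"

definition reg_coderiv :: "('a::real_inner \<Rightarrow> 'b::real_inner set) \<Rightarrow> 'a \<times> 'b \<Rightarrow> 'b \<Rightarrow> 'a set" where
  "reg_coderiv S p \<mu> = {\<xi>. (\<xi>, - \<mu>) \<in> reg_normal (gph S) p}"

definition dir_coderiv :: "('a::real_inner \<Rightarrow> 'b::real_inner set) \<Rightarrow> 'a \<times> 'b \<Rightarrow> 'a \<times> 'b \<Rightarrow> 'b \<Rightarrow> 'a set" where
  "dir_coderiv S p d \<mu> = {\<xi>. (\<xi>, - \<mu>) \<in> dir_normal (gph S) p d}"

definition dir_pseudo_normal :: "('x::real_inner \<Rightarrow> 'y::real_inner set) \<Rightarrow> 'x \<Rightarrow> 'y \<Rightarrow> 'x \<Rightarrow> bool" where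
  "dir_pseudo_normal \<Phi> xb yb u \<longleftrightarrow>
     \<not> (\<exists>lam. lam \<noteq> 0 \<and> 0 \<in> dir_coderiv \<Phi> (xb, yb) (u, 0) lam \<and>
          (\<exists>xs ys lams \<eta>s.
             (\<forall>k. ys k \<in> \<Phi> (xs k) \<and> xs k \<noteq> xb) \<and>
             xs \<longlonglongrightarrow> xb \<and> ys \<longlonglongrightarrow> yb \<and> lams \<longlonglongrightarrow> lam \<and> \<eta>s \<longlonglongrightarrow> 0 \<and>
             (\<lambda>k. (1 / norm (xs k - xb)) *\<^sub>R (xs k - xb)) \<longlonglongrightarrow> u \<and>
             (\<lambda>k. (1 / norm (xs k - xb)) *\<^sub>R (ys k - yb)) \<longlonglongrightarrow> 0 \<and>
             (\<forall>k. \<eta>s k \<in> reg_coderiv \<Phi> (xs k, ys k) (lams k)) \<and>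
             (\<forall>k. inner lam (ys k - yb) > 0)))"

definition dir_quasi_normal :: "('x::real_inner \<Rightarrow> 'y::real_inner set) \<Rightarrow> 'x \<Rightarrow> 'y \<Rightarrow> 'x \<Rightarrow> 'y set \<Rightarrow> bool" where
  "dir_quasi_normal \<Phi> xb yb u B \<longleftrightarrow>
     \<not> (\<exists>lam. lam \<noteq> 0 \<and> 0 \<in> dir_coderiv \<Phi> (xb, yb) (u, 0) lam \<and>
          (\<exists>xs ys lams \<eta>s.
             (\<forall>k. ys k \<in> \<Phi> (xs k) \<and> xs k \<noteq> xb) \<and>
             xs \<longlonglongrightarrow> xb \<and> ys \<longlonglongrightarrow> yb \<and> lams \<longlonglongrightarrow> lam \<and> \<eta>s \<longlonglongrightarrow> 0 \<and>
             (\<lambda>k. (1 / norm (xs k - xb)) *\<^sub>R (xs k - xb)) \<longlonglongrightarrow> u \<and>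
             (\<lambda>k. (1 / norm (xs k - xb)) *\<^sub>R (ys k - yb)) \<longlonglongrightarrow> 0 \<and>
             (\<forall>k. \<eta>s k \<in> reg_coderiv \<Phi> (xs k, ys k) (lams k)) \<and>
             (\<forall>k. \<forall>e\<in>B. inner lam e \<noteq> 0 \<longrightarrow> inner lam e * inner (ys k - yb) e > 0)))"

definition orthonormal_basis :: "'a::euclidean_space set \<Rightarrow> bool" where
  "orthonormal_basis B \<longleftrightarrow> (\<forall>e\<in>B. norm e = 1) \<and> pairwise orthogonal B \<and> span B = UNIV"

definition PhiMap :: "'a::real_inner set \<Rightarrow> ('a \<Rightarrow> 'b::real_inner set) \<Rightarrow> 'a \<times> 'b \<Rightarrow> ('a \<times> 'b) set" where
  "PhiMap \<Omega> S x = {(w - fst x, v - snd x) | w v. w \<in> \<Omega> \<and> v \<in> S (fst x)}"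

end

theory Submission
  imports Defs
begin

lemma PhiMap_mem: "y \<in> PhiMap \<Omega> S x \<longleftrightarrow> fst y + fst x \<in> \<Omega> \<and> snd y + snd x \<in> S (fst x)"
  unfolding PhiMap_def
  apply (rule iffI)
   apply force
  apply (rule CollectI, rule exI[of _ "fst y + fst x"], rule exI[of _ "snd y + snd x"])
  apply (simp add: prod_eq_iff)
  done

lemma norm_pair2:
  fixes a :: "'a::real_normed_vector" and b :: "'b::real_normed_vector"
  shows "norm (a, b) \<le> norm a + norm b"
proof -
  have "norm (a, b) = norm ((a, 0) + (0, b))" by simp
  also have "\<dots> \<le> norm (a, 0::'b) + norm (0::'a, b)" by (rule norm_triangle_ineq)
  finally show ?thesis by simp
qed

lemma norm_pair4: "norm ((a, b), (c, d)) \<le> norm a + norm b + norm c + norm d"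
  using norm_pair2[of "(a,b)" "(c,d)"] norm_pair2[of a b] norm_pair2[of c d] by linarith

lemma key0:
  fixes \<Omega> :: "'a::real_inner set" and S :: "'a \<Rightarrow> 'b::real_inner set"
  assumes N: "((\<xi>1,\<xi>2),(\<zeta>1,\<zeta>2)) \<in> reg_normal (gph (PhiMap \<Omega> S)) ((x1,x2),(y1,y2))"
  shows "\<xi>2 = \<zeta>2 \<and> \<zeta>1 \<in> reg_normal \<Omega> (x1+y1) \<and> (\<xi>1-\<zeta>1, \<zeta>2) \<in> reg_normal (gph S) (x1, x2+y2)"
proof -
  have inG: "((x1,x2),(y1,y2)) \<in> gph (PhiMap \<Omega> S)"
    using N unfolding reg_normal_def by (auto split: if_splits)
  hence mem: "y1 + x1 \<in> \<Omega>" "y2 + x2 \<in> S x1"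
    unfolding gph_def by (auto simp: PhiMap_mem)
  have R: "\<And>\<epsilon>. \<epsilon> > 0 \<Longrightarrow> \<exists>\<delta>>0. \<forall>q\<in>gph (PhiMap \<Omega> S). norm (q - ((x1,x2),(y1,y2))) < \<delta> \<longrightarrow>
        inner ((\<xi>1,\<xi>2),(\<zeta>1,\<zeta>2)) (q - ((x1,x2),(y1,y2))) \<le> \<epsilon> * norm (q - ((x1,x2),(y1,y2)))"
    using N inG unfolding reg_normal_def by auto
  have gmem: "((a1,a2),(b1,b2)) \<in> gph (PhiMap \<Omega> S) \<longleftrightarrow> b1 + a1 \<in> \<Omega> \<and> b2 + a2 \<in> S a1" for a1 a2 b1 b2
    unfolding gph_def by (simp add: PhiMap_mem)
  have P1: "\<xi>2 = \<zeta>2"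
  proof (rule ccontr)
    assume "\<xi>2 \<noteq> \<zeta>2"
    define d where "d = \<xi>2 - \<zeta>2"
    have dpos: "norm d > 0" using \<open>\<xi>2 \<noteq> \<zeta>2\<close> by (simp add: d_def)
    obtain \<delta> where \<delta>: "\<delta> > 0" and H: "\<forall>q\<in>gph (PhiMap \<Omega> S). norm (q - ((x1,x2),(y1,y2))) < \<delta> \<longrightarrow>
        inner ((\<xi>1,\<xi>2),(\<zeta>1,\<zeta>2)) (q - ((x1,x2),(y1,y2))) \<le> (norm d / 4) * norm (q - ((x1,x2),(y1,y2)))"
      using R[of "norm d / 4"] dpos by auto
    define s where "s = \<delta> / (4 * norm d)"
    have spos: "s > 0" using \<delta> dpos by (simp add: s_def)
    define q where "q = ((x1, x2 + s *\<^sub>R d), (y1, y2 - s *\<^sub>R d))"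
    have qG: "q \<in> gph (PhiMap \<Omega> S)" using mem unfolding q_def gmem by (simp add: algebra_simps)
    have qd: "q - ((x1,x2),(y1,y2)) = ((0, s *\<^sub>R d), (0, - (s *\<^sub>R d)))" by (simp add: q_def)
    have nq: "norm (q - ((x1,x2),(y1,y2))) \<le> 2 * s * norm d"
      using norm_pair4[of 0 "s *\<^sub>R d" 0 "- (s *\<^sub>R d)"] spos unfolding qd by (simp add: mult.assoc)
    have "2 * s * norm d = \<delta> / 2" using dpos by (simp add: s_def)
    hence "norm (q - ((x1,x2),(y1,y2))) < \<delta>" using nq \<delta> by linarith
    hence "inner ((\<xi>1,\<xi>2),(\<zeta>1,\<zeta>2)) (q - ((x1,x2),(y1,y2))) \<le> (norm d / 4) * norm (q - ((x1,x2),(y1,y2)))"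
      using H qG by blast
    moreover have "inner ((\<xi>1,\<xi>2),(\<zeta>1,\<zeta>2)) (q - ((x1,x2),(y1,y2))) = s * (norm d)^2"
      unfolding qd by (simp add: d_def inner_diff_left power2_norm_eq_inner algebra_simps)
    moreover have "(norm d / 4) * norm (q - ((x1,x2),(y1,y2))) \<le> (norm d / 4) * (2 * s * norm d)"
      using nq dpos by (intro mult_left_mono) auto
    ultimately have "s * (norm d)^2 \<le> s * (norm d)^2 / 2" by (simp add: power2_eq_square)
    thus False using spos dpos by simp
  qed
  have P2: "\<zeta>1 \<in> reg_normal \<Omega> (x1+y1)"
  proof -
    have "x1 + y1 \<in> \<Omega>" using mem by (simp add: add.commute)
    moreover have "\<forall>\<epsilon>>0. \<exists>\<delta>>0. \<forall>w\<in>\<Omega>. norm (w - (x1+y1)) < \<delta> \<longrightarrow> inner \<zeta>1 (w - (x1+y1)) \<le> \<epsilon> * norm (w - (x1+y1))"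
    proof (intro allI impI)
      fix \<epsilon> :: real assume "\<epsilon> > 0"
      then obtain \<delta> where \<delta>: "\<delta> > 0" and H: "\<forall>q\<in>gph (PhiMap \<Omega> S). norm (q - ((x1,x2),(y1,y2))) < \<delta> \<longrightarrow>
        inner ((\<xi>1,\<xi>2),(\<zeta>1,\<zeta>2)) (q - ((x1,x2),(y1,y2))) \<le> \<epsilon> * norm (q - ((x1,x2),(y1,y2)))"
        using R by blast
      show "\<exists>\<delta>>0. \<forall>w\<in>\<Omega>. norm (w - (x1+y1)) < \<delta> \<longrightarrow> inner \<zeta>1 (w - (x1+y1)) \<le> \<epsilon> * norm (w - (x1+y1))"
      proof (intro exI[of _ \<delta>] conjI ballI impI)
        fix w assume w: "w \<in> \<Omega>" "norm (w - (x1+y1)) < \<delta>"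
        define q where "q = ((x1, x2), (w - x1, y2))"
        have qG: "q \<in> gph (PhiMap \<Omega> S)" using mem w unfolding q_def gmem by simp
        have qd: "q - ((x1,x2),(y1,y2)) = ((0, 0), (w - (x1+y1), 0))" by (simp add: q_def algebra_simps zero_prod_def)
        have nq: "norm (q - ((x1,x2),(y1,y2))) = norm (w - (x1+y1))" unfolding qd by (simp add: norm_Pair)
        show "inner \<zeta>1 (w - (x1+y1)) \<le> \<epsilon> * norm (w - (x1+y1))"
        proof -
          have "inner ((\<xi>1,\<xi>2),(\<zeta>1,\<zeta>2)) (q - ((x1,x2),(y1,y2))) \<le> \<epsilon> * norm (q - ((x1,x2),(y1,y2)))"
            using H qG w(2) nq by (metis (no_types, lifting))
          moreover have "inner ((\<xi>1,\<xi>2),(\<zeta>1,\<zeta>2)) (q - ((x1,x2),(y1,y2))) = inner \<zeta>1 (w - (x1+y1))"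
            unfolding qd by simp
          ultimately show ?thesis using nq by simp
        qed
      qed (use \<delta> in auto)
    qed
    ultimately show ?thesis unfolding reg_normal_def by simp
  qed
  have P3: "(\<xi>1-\<zeta>1, \<zeta>2) \<in> reg_normal (gph S) (x1, x2+y2)"
  proof -
    have "(x1, x2+y2) \<in> gph S" using mem by (simp add: gph_def add.commute)
    moreover have "\<forall>\<epsilon>>0. \<exists>\<delta>>0. \<forall>z\<in>gph S. norm (z - (x1, x2+y2)) < \<delta> \<longrightarrow> inner (\<xi>1-\<zeta>1, \<zeta>2) (z - (x1, x2+y2)) \<le> \<epsilon> * norm (z - (x1, x2+y2))"
    proof (intro allI impI)
      fix \<epsilon> :: real assume "\<epsilon> > 0"
      then obtain \<delta> where \<delta>: "\<delta> > 0" and H: "\<forall>q\<in>gph (PhiMap \<Omega> S). norm (q - ((x1,x2),(y1,y2))) < \<delta> \<longrightarrow>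
        inner ((\<xi>1,\<xi>2),(\<zeta>1,\<zeta>2)) (q - ((x1,x2),(y1,y2))) \<le> (\<epsilon>/3) * norm (q - ((x1,x2),(y1,y2)))"
        using R[of "\<epsilon>/3"] by auto
      show "\<exists>\<delta>>0. \<forall>z\<in>gph S. norm (z - (x1, x2+y2)) < \<delta> \<longrightarrow> inner (\<xi>1-\<zeta>1, \<zeta>2) (z - (x1, x2+y2)) \<le> \<epsilon> * norm (z - (x1, x2+y2))"
      proof (intro exI[of _ "\<delta>/3"] conjI ballI impI)
        fix z assume z: "z \<in> gph S" "norm (z - (x1, x2+y2)) < \<delta>/3"
        obtain a b where ab: "z = (a, b)" by (cases z)
        have bS: "b \<in> S a" using z(1) ab by (simp add: gph_def)
        define n where "n = norm (z - (x1, x2+y2))"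
        have na: "norm (a - x1) \<le> n" using norm_fst_le[of "a - x1" "b - (x2+y2)"] by (simp add: n_def ab)
        have nb: "norm (b - (x2+y2)) \<le> n" using norm_snd_le[of "b - (x2+y2)" "a - x1"] by (simp add: n_def ab)
        define q where "q = ((a, x2), (y1 + x1 - a, b - x2))"
        have qG: "q \<in> gph (PhiMap \<Omega> S)" using mem bS unfolding q_def gmem by (simp add: algebra_simps)
        have qd: "q - ((x1,x2),(y1,y2)) = ((a - x1, 0), (-(a - x1), b - (x2+y2)))" by (simp add: q_def algebra_simps)
        have nq: "norm (q - ((x1,x2),(y1,y2))) \<le> 3 * n"
        proof -
          have "norm (q - ((x1,x2),(y1,y2))) \<le> norm (a - x1) + norm (0::'b) + norm (-(a - x1)) + norm (b - (x2+y2))"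
            unfolding qd by (rule norm_pair4)
          thus ?thesis using na nb norm_minus_commute[of a x1] by simp
        qed
        have "norm (q - ((x1,x2),(y1,y2))) < \<delta>" using nq z(2) unfolding n_def by linarith
        hence "inner ((\<xi>1,\<xi>2),(\<zeta>1,\<zeta>2)) (q - ((x1,x2),(y1,y2))) \<le> (\<epsilon>/3) * norm (q - ((x1,x2),(y1,y2)))"
          using H qG by blast
        moreover have "inner ((\<xi>1,\<xi>2),(\<zeta>1,\<zeta>2)) (q - ((x1,x2),(y1,y2))) = inner (\<xi>1-\<zeta>1, \<zeta>2) (z - (x1, x2+y2))"
          unfolding qd ab by (simp add: inner_diff_left inner_diff_right)
        moreover have "(\<epsilon>/3) * norm (q - ((x1,x2),(y1,y2))) \<le> (\<epsilon>/3) * (3 * n)"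
          using nq \<open>\<epsilon> > 0\<close> by (intro mult_left_mono) auto
        ultimately show "inner (\<xi>1-\<zeta>1, \<zeta>2) (z - (x1, x2+y2)) \<le> \<epsilon> * norm (z - (x1, x2+y2))"
          unfolding n_def by simp
      qed (use \<delta> in auto)
    qed
    ultimately show ?thesis unfolding reg_normal_def by simp
  qed
  show ?thesis using P1 P2 P3 by blast
qed

lemma key:
  fixes \<Omega> :: "'a::real_inner set" and S :: "'a \<Rightarrow> 'b::real_inner set"
  assumes "N \<in> reg_normal (gph (PhiMap \<Omega> S)) p"
  shows "snd (fst N) = snd (snd N) \<and> fst (snd N) \<in> reg_normal \<Omega> (fst (fst p) + fst (snd p)) \<and>
     (fst (fst N) - fst (snd N), snd (snd N)) \<in> reg_normal (gph S) (fst (fst p), snd (fst p) + snd (snd p))"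
proof -
  obtain a b c d where N: "N = ((a,b),(c,d))" by (metis prod.collapse)
  obtain e f g h where p: "p = ((e,f),(g,h))" by (metis prod.collapse)
  show ?thesis using key0[of a b c d \<Omega> S e f g h] assms unfolding N p by simp
qed

lemma transfer:
  fixes \<Omega> :: "'a::real_inner set" and S :: "'a \<Rightarrow> 'b::real_inner set"
    and lam :: "'a \<times> 'b"
  assumes lam0: "lam \<noteq> 0" and D: "0 \<in> dir_coderiv (PhiMap \<Omega> S) (xb, 0) (u, 0) lam"
    and R: "\<forall>k. \<eta>s k \<in> reg_coderiv (PhiMap \<Omega> S) (xs k, ys k) (lams k)"
    and L: "lams \<longlonglongrightarrow> lam" and E: "\<eta>s \<longlonglongrightarrow> 0"
  shows "snd lam = 0 \<and> fst lam \<noteq> 0 \<and> fst lam \<in> dir_coderiv S xb u 0 \<and> - fst lam \<in> dir_normal \<Omega> (fst xb) (fst u) \<and>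
    (\<forall>k. fst (\<eta>s k) + fst (lams k) \<in> reg_coderiv S (fst (xs k), snd (xs k) + snd (ys k)) (snd (lams k)) \<and>
         - fst (lams k) \<in> reg_normal \<Omega> (fst (xs k) + fst (ys k))) \<and>
    (\<lambda>k. snd (lams k)) \<longlonglongrightarrow> 0 \<and> (\<lambda>k. fst (lams k)) \<longlonglongrightarrow> fst lam \<and> (\<lambda>k. fst (\<eta>s k)) \<longlonglongrightarrow> 0"
proof -
  have Kk: "\<And>k. snd (\<eta>s k) = - snd (lams k) \<and> - fst (lams k) \<in> reg_normal \<Omega> (fst (xs k) + fst (ys k)) \<and>
     (fst (\<eta>s k) + fst (lams k), - snd (lams k)) \<in> reg_normal (gph S) (fst (xs k), snd (xs k) + snd (ys k))"
  proof -
    fix k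
    have "(\<eta>s k, - lams k) \<in> reg_normal (gph (PhiMap \<Omega> S)) (xs k, ys k)"
      using R unfolding reg_coderiv_def by auto
    from key[OF this] show "?thesis k" by simp
  qed
  have "(\<lambda>k. - snd (\<eta>s k)) \<longlonglongrightarrow> - snd (0::'a\<times>'b)"
    by (intro tendsto_minus tendsto_snd E)
  hence s0: "(\<lambda>k. snd (lams k)) \<longlonglongrightarrow> 0" using Kk by simp
  have "(\<lambda>k. snd (lams k)) \<longlonglongrightarrow> snd lam" by (intro tendsto_snd L)
  hence sl: "snd lam = 0" using s0 LIMSEQ_unique by blast
  have fl: "fst lam \<noteq> 0" using lam0 sl by (simp add: prod_eq_iff)
  have f1: "(\<lambda>k. fst (lams k)) \<longlonglongrightarrow> fst lam" by (intro tendsto_fst L)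
  have f2: "(\<lambda>k. fst (\<eta>s k)) \<longlonglongrightarrow> 0"
    using tendsto_fst[OF E] by simp
  from D obtain t w N where t: "\<forall>k. t k > 0" "t \<longlonglongrightarrow> 0" and w: "w \<longlonglongrightarrow> (u, 0)"
    and N: "N \<longlonglongrightarrow> (0, - lam)" and Nk: "\<forall>k. N k \<in> reg_normal (gph (PhiMap \<Omega> S)) ((xb, 0) + t k *\<^sub>R w k)"
    unfolding dir_coderiv_def dir_normal_def by auto
  have KN: "\<And>k. fst (snd (N k)) \<in> reg_normal \<Omega> (fst xb + t k *\<^sub>R (fst (fst (w k)) + fst (snd (w k))))
     \<and> (fst (fst (N k)) - fst (snd (N k)), snd (snd (N k))) \<in> reg_normal (gph S) (xb + t k *\<^sub>R (fst (fst (w k)), snd (fst (w k)) + snd (snd (w k))))"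
  proof -
    fix k
    have e: "xb + t k *\<^sub>R (fst (fst (w k)), snd (fst (w k)) + snd (snd (w k))) =
      (fst xb + t k *\<^sub>R fst (fst (w k)), snd xb + (t k *\<^sub>R snd (fst (w k)) + t k *\<^sub>R snd (snd (w k))))"
      by (simp add: prod_eq_iff scaleR_right_distrib)
    from key[OF Nk[rule_format, of k]] show "?thesis k"
      unfolding e by (simp add: scaleR_right_distrib add.assoc)
  qed
  have w1: "(\<lambda>k. fst (fst (w k))) \<longlonglongrightarrow> fst u" using tendsto_fst[OF tendsto_fst[OF w]] by simp
  have w2: "(\<lambda>k. snd (fst (w k))) \<longlonglongrightarrow> snd u" using tendsto_snd[OF tendsto_fst[OF w]] by simp
  have w3: "(\<lambda>k. fst (snd (w k))) \<longlonglongrightarrow> 0" using tendsto_fst[OF tendsto_snd[OF w]] by simp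
  have w4: "(\<lambda>k. snd (snd (w k))) \<longlonglongrightarrow> 0" using tendsto_snd[OF tendsto_snd[OF w]] by simp
  have n1: "(\<lambda>k. fst (fst (N k))) \<longlonglongrightarrow> 0" using tendsto_fst[OF tendsto_fst[OF N]] by simp
  have n3: "(\<lambda>k. fst (snd (N k))) \<longlonglongrightarrow> - fst lam" using tendsto_fst[OF tendsto_snd[OF N]] by simp
  have n4: "(\<lambda>k. snd (snd (N k))) \<longlonglongrightarrow> 0" using tendsto_snd[OF tendsto_snd[OF N]] sl by simp
  have DN: "- fst lam \<in> dir_normal \<Omega> (fst xb) (fst u)"
    unfolding dir_normal_def
  proof (intro CollectI exI conjI)
    show "\<forall>k. t k > 0" using t by simp
    show "t \<longlonglongrightarrow> 0" using t by simp
    show "(\<lambda>k. fst (fst (w k)) + fst (snd (w k))) \<longlonglongrightarrow> fst u" using tendsto_add[OF w1 w3] by simp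
    show "(\<lambda>k. fst (snd (N k))) \<longlonglongrightarrow> - fst lam" by (rule n3)
    show "\<forall>k. fst (snd (N k)) \<in> reg_normal \<Omega> (fst xb + t k *\<^sub>R (fst (fst (w k)) + fst (snd (w k))))"
      using KN by blast
  qed
  have DC: "fst lam \<in> dir_coderiv S xb u 0"
    unfolding dir_coderiv_def dir_normal_def
  proof (intro CollectI exI conjI)
    show "\<forall>k. t k > 0" using t by simp
    show "t \<longlonglongrightarrow> 0" using t by simp
    show "(\<lambda>k. (fst (fst (w k)), snd (fst (w k)) + snd (snd (w k)))) \<longlonglongrightarrow> u"
      using tendsto_Pair[OF w1 tendsto_add[OF w2 w4]] by simp
    show "(\<lambda>k. (fst (fst (N k)) - fst (snd (N k)), snd (snd (N k)))) \<longlonglongrightarrow> (fst lam, - 0)"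
      using tendsto_Pair[OF tendsto_diff[OF n1 n3] n4] by simp
    show "\<forall>k. (fst (fst (N k)) - fst (snd (N k)), snd (snd (N k))) \<in> reg_normal (gph S) (xb + t k *\<^sub>R (fst (fst (w k)), snd (fst (w k)) + snd (snd (w k))))"
      using KN by blast
  qed
  show ?thesis using sl fl DC DN Kk s0 f1 f2 unfolding reg_coderiv_def by auto
qed

theorem mainTheorem7:
  fixes \<Omega> :: "'a::euclidean_space set" and S :: "'a \<Rightarrow> 'b::euclidean_space set"
    and xb :: "'a \<times> 'b" and u :: "'a \<times> 'b"
  assumes "closed (gph S)" and "closed \<Omega>"
    and "(0::'a \<times> 'b) \<in> PhiMap \<Omega> S xb"
    and "norm u = 1"
  shows
   "(\<not> (\<exists>lam::'a. lam \<noteq> 0 \<and> lam \<in> dir_coderiv S xb u 0 \<and> - lam \<in> dir_normal \<Omega> (fst xb) (fst u) \<and>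
        (\<exists>(xs :: nat \<Rightarrow> 'a \<times> 'b) (ys :: nat \<Rightarrow> 'a \<times> 'b) (lams :: nat \<Rightarrow> 'a) (\<eta>s :: nat \<Rightarrow> 'a) (\<mu>s :: nat \<Rightarrow> 'b).
           (\<forall>k. ys k \<in> PhiMap \<Omega> S (xs k) \<and> xs k \<noteq> xb) \<and>
           xs \<longlonglongrightarrow> xb \<and> ys \<longlonglongrightarrow> 0 \<and> lams \<longlonglongrightarrow> lam \<and> \<mu>s \<longlonglongrightarrow> 0 \<and> \<eta>s \<longlonglongrightarrow> 0 \<and>
           (\<lambda>k. (1 / norm (xs k - xb)) *\<^sub>R (xs k - xb)) \<longlonglongrightarrow> u \<and>
           (\<lambda>k. (1 / norm (xs k - xb)) *\<^sub>R ys k) \<longlonglongrightarrow> 0 \<and>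
           (\<forall>k. \<eta>s k + lams k \<in> reg_coderiv S (fst (xs k), snd (xs k) + snd (ys k)) (\<mu>s k) \<and>
                - lams k \<in> reg_normal \<Omega> (fst (xs k) + fst (ys k)) \<and>
                inner lam (fst (ys k)) > 0)))
     \<longrightarrow> dir_pseudo_normal (PhiMap \<Omega> S) xb 0 u)
  \<and>
   (\<forall>(E1 :: 'a set) (E2 :: 'b set). orthonormal_basis E1 \<and> orthonormal_basis E2 \<and>
     \<not> (\<exists>lam::'a. lam \<noteq> 0 \<and> lam \<in> dir_coderiv S xb u 0 \<and> - lam \<in> dir_normal \<Omega> (fst xb) (fst u) \<and>
        (\<exists>(xs :: nat \<Rightarrow> 'a \<times> 'b) (ys :: nat \<Rightarrow> 'a \<times> 'b) (lams :: nat \<Rightarrow> 'a) (\<eta>s :: nat \<Rightarrow> 'a) (\<mu>s :: nat \<Rightarrow> 'b).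
           (\<forall>k. ys k \<in> PhiMap \<Omega> S (xs k) \<and> xs k \<noteq> xb) \<and>
           xs \<longlonglongrightarrow> xb \<and> ys \<longlonglongrightarrow> 0 \<and> lams \<longlonglongrightarrow> lam \<and> \<mu>s \<longlonglongrightarrow> 0 \<and> \<eta>s \<longlonglongrightarrow> 0 \<and>
           (\<lambda>k. (1 / norm (xs k - xb)) *\<^sub>R (xs k - xb)) \<longlonglongrightarrow> u \<and>
           (\<lambda>k. (1 / norm (xs k - xb)) *\<^sub>R ys k) \<longlonglongrightarrow> 0 \<and>
           (\<forall>k. \<eta>s k + lams k \<in> reg_coderiv S (fst (xs k), snd (xs k) + snd (ys k)) (\<mu>s k) \<and>
                - lams k \<in> reg_normal \<Omega> (fst (xs k) + fst (ys k)) \<and>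
                (\<forall>e\<in>E1. inner lam e \<noteq> 0 \<longrightarrow> inner lam e * inner (fst (ys k)) e > 0))))
     \<longrightarrow> dir_quasi_normal (PhiMap \<Omega> S) xb 0 u
           ((\<lambda>e. (e, 0)) ` E1 \<union> (\<lambda>e. (0, e)) ` E2))"
proof (rule conjI)
  let ?\<Phi> = "PhiMap \<Omega> S"
  show "(\<not> (\<exists>lam::'a. lam \<noteq> 0 \<and> lam \<in> dir_coderiv S xb u 0 \<and> - lam \<in> dir_normal \<Omega> (fst xb) (fst u) \<and>
        (\<exists>(xs :: nat \<Rightarrow> 'a \<times> 'b) (ys :: nat \<Rightarrow> 'a \<times> 'b) (lams :: nat \<Rightarrow> 'a) (\<eta>s :: nat \<Rightarrow> 'a) (\<mu>s :: nat \<Rightarrow> 'b).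
           (\<forall>k. ys k \<in> PhiMap \<Omega> S (xs k) \<and> xs k \<noteq> xb) \<and>
           xs \<longlonglongrightarrow> xb \<and> ys \<longlonglongrightarrow> 0 \<and> lams \<longlonglongrightarrow> lam \<and> \<mu>s \<longlonglongrightarrow> 0 \<and> \<eta>s \<longlonglongrightarrow> 0 \<and>
           (\<lambda>k. (1 / norm (xs k - xb)) *\<^sub>R (xs k - xb)) \<longlonglongrightarrow> u \<and>
           (\<lambda>k. (1 / norm (xs k - xb)) *\<^sub>R ys k) \<longlonglongrightarrow> 0 \<and>
           (\<forall>k. \<eta>s k + lams k \<in> reg_coderiv S (fst (xs k), snd (xs k) + snd (ys k)) (\<mu>s k) \<and>
                - lams k \<in> reg_normal \<Omega> (fst (xs k) + fst (ys k)) \<and>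
                inner lam (fst (ys k)) > 0)))
     \<longrightarrow> dir_pseudo_normal (PhiMap \<Omega> S) xb 0 u)" (is "\<not> ?H \<longrightarrow> _")
  proof (intro impI)
    assume nH: "\<not> ?H"
    show "dir_pseudo_normal (PhiMap \<Omega> S) xb 0 u"
      unfolding dir_pseudo_normal_def
    proof
      assume "\<exists>lam. lam \<noteq> 0 \<and> 0 \<in> dir_coderiv ?\<Phi> (xb, 0) (u, 0) lam \<and>
          (\<exists>xs ys lams \<eta>s.
             (\<forall>k. ys k \<in> ?\<Phi> (xs k) \<and> xs k \<noteq> xb) \<and>
             xs \<longlonglongrightarrow> xb \<and> ys \<longlonglongrightarrow> 0 \<and> lams \<longlonglongrightarrow> lam \<and> \<eta>s \<longlonglongrightarrow> 0 \<and>
             (\<lambda>k. (1 / norm (xs k - xb)) *\<^sub>R (xs k - xb)) \<longlonglongrightarrow> u \<and>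
             (\<lambda>k. (1 / norm (xs k - xb)) *\<^sub>R (ys k - 0)) \<longlonglongrightarrow> 0 \<and>
             (\<forall>k. \<eta>s k \<in> reg_coderiv ?\<Phi> (xs k, ys k) (lams k)) \<and>
             (\<forall>k. inner lam (ys k - 0) > 0))"
      then obtain lam xs ys lams \<eta>s where l0: "lam \<noteq> 0" and D: "0 \<in> dir_coderiv ?\<Phi> (xb, 0) (u, 0) lam"
        and c1: "\<forall>k. ys k \<in> ?\<Phi> (xs k) \<and> xs k \<noteq> xb" and c2: "xs \<longlonglongrightarrow> xb" and c3: "ys \<longlonglongrightarrow> 0"
        and c4: "lams \<longlonglongrightarrow> lam" and c5: "\<eta>s \<longlonglongrightarrow> 0"
        and c6: "(\<lambda>k. (1 / norm (xs k - xb)) *\<^sub>R (xs k - xb)) \<longlonglongrightarrow> u"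
        and c7: "(\<lambda>k. (1 / norm (xs k - xb)) *\<^sub>R (ys k - 0)) \<longlonglongrightarrow> 0"
        and c8: "\<forall>k. \<eta>s k \<in> reg_coderiv ?\<Phi> (xs k, ys k) (lams k)"
        and c9: "\<forall>k. inner lam (ys k - 0) > 0"
        by blast
      note T = transfer[OF l0 D c8 c4 c5]
      have inn: "inner lam (ys k - 0) = inner (fst lam) (fst (ys k))" for k
        using T by (simp add: inner_prod_def)
      have "?H"
        apply (rule exI[of _ "fst lam"])
        apply (intro conjI)
        using T apply blast
        using T apply blast
        using T apply blast
        apply (rule exI[of _ xs], rule exI[of _ ys], rule exI[of _ "\<lambda>k. fst (lams k)"],
               rule exI[of _ "\<lambda>k. fst (\<eta>s k)"], rule exI[of _ "\<lambda>k. snd (lams k)"])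
        using T c1 c2 c3 c6 c7 c9 inn by simp
      with nH show False by blast
    qed
  qed
next
  show "\<forall>(E1 :: 'a set) (E2 :: 'b set). orthonormal_basis E1 \<and> orthonormal_basis E2 \<and>
     \<not> (\<exists>lam::'a. lam \<noteq> 0 \<and> lam \<in> dir_coderiv S xb u 0 \<and> - lam \<in> dir_normal \<Omega> (fst xb) (fst u) \<and>
        (\<exists>(xs :: nat \<Rightarrow> 'a \<times> 'b) (ys :: nat \<Rightarrow> 'a \<times> 'b) (lams :: nat \<Rightarrow> 'a) (\<eta>s :: nat \<Rightarrow> 'a) (\<mu>s :: nat \<Rightarrow> 'b).
           (\<forall>k. ys k \<in> PhiMap \<Omega> S (xs k) \<and> xs k \<noteq> xb) \<and>
           xs \<longlonglongrightarrow> xb \<and> ys \<longlonglongrightarrow> 0 \<and> lams \<longlonglongrightarrow> lam \<and> \<mu>s \<longlonglongrightarrow> 0 \<and> \<eta>s \<longlonglongrightarrow> 0 \<and>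
           (\<lambda>k. (1 / norm (xs k - xb)) *\<^sub>R (xs k - xb)) \<longlonglongrightarrow> u \<and>
           (\<lambda>k. (1 / norm (xs k - xb)) *\<^sub>R ys k) \<longlonglongrightarrow> 0 \<and>
           (\<forall>k. \<eta>s k + lams k \<in> reg_coderiv S (fst (xs k), snd (xs k) + snd (ys k)) (\<mu>s k) \<and>
                - lams k \<in> reg_normal \<Omega> (fst (xs k) + fst (ys k)) \<and>
                (\<forall>e\<in>E1. inner lam e \<noteq> 0 \<longrightarrow> inner lam e * inner (fst (ys k)) e > 0))))
     \<longrightarrow> dir_quasi_normal (PhiMap \<Omega> S) xb 0 u
           ((\<lambda>e. (e, 0)) ` E1 \<union> (\<lambda>e. (0, e)) ` E2)"
  proof (intro allI impI)
    fix E1 :: "'a set" and E2 :: "'b set"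
    let ?\<Phi> = "PhiMap \<Omega> S"
    let ?B = "(\<lambda>e. (e, 0)) ` E1 \<union> (\<lambda>e. (0, e)) ` E2"
    assume A: "orthonormal_basis E1 \<and> orthonormal_basis E2 \<and>
     \<not> (\<exists>lam::'a. lam \<noteq> 0 \<and> lam \<in> dir_coderiv S xb u 0 \<and> - lam \<in> dir_normal \<Omega> (fst xb) (fst u) \<and>
        (\<exists>(xs :: nat \<Rightarrow> 'a \<times> 'b) (ys :: nat \<Rightarrow> 'a \<times> 'b) (lams :: nat \<Rightarrow> 'a) (\<eta>s :: nat \<Rightarrow> 'a) (\<mu>s :: nat \<Rightarrow> 'b).
           (\<forall>k. ys k \<in> PhiMap \<Omega> S (xs k) \<and> xs k \<noteq> xb) \<and>
           xs \<longlonglongrightarrow> xb \<and> ys \<longlonglongrightarrow> 0 \<and> lams \<longlonglongrightarrow> lam \<and> \<mu>s \<longlonglongrightarrow> 0 \<and> \<eta>s \<longlonglongrightarrow> 0 \<and>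
           (\<lambda>k. (1 / norm (xs k - xb)) *\<^sub>R (xs k - xb)) \<longlonglongrightarrow> u \<and>
           (\<lambda>k. (1 / norm (xs k - xb)) *\<^sub>R ys k) \<longlonglongrightarrow> 0 \<and>
           (\<forall>k. \<eta>s k + lams k \<in> reg_coderiv S (fst (xs k), snd (xs k) + snd (ys k)) (\<mu>s k) \<and>
                - lams k \<in> reg_normal \<Omega> (fst (xs k) + fst (ys k)) \<and>
                (\<forall>e\<in>E1. inner lam e \<noteq> 0 \<longrightarrow> inner lam e * inner (fst (ys k)) e > 0))))"
      (is "_ \<and> _ \<and> \<not> ?H")
    hence nH: "\<not> ?H" by blast
    show "dir_quasi_normal (PhiMap \<Omega> S) xb 0 u ?B"
      unfolding dir_quasi_normal_def
    proof
      assume "\<exists>lam. lam \<noteq> 0 \<and> 0 \<in> dir_coderiv ?\<Phi> (xb, 0) (u, 0) lam \<and>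
          (\<exists>xs ys lams \<eta>s.
             (\<forall>k. ys k \<in> ?\<Phi> (xs k) \<and> xs k \<noteq> xb) \<and>
             xs \<longlonglongrightarrow> xb \<and> ys \<longlonglongrightarrow> 0 \<and> lams \<longlonglongrightarrow> lam \<and> \<eta>s \<longlonglongrightarrow> 0 \<and>
             (\<lambda>k. (1 / norm (xs k - xb)) *\<^sub>R (xs k - xb)) \<longlonglongrightarrow> u \<and>
             (\<lambda>k. (1 / norm (xs k - xb)) *\<^sub>R (ys k - 0)) \<longlonglongrightarrow> 0 \<and>
             (\<forall>k. \<eta>s k \<in> reg_coderiv ?\<Phi> (xs k, ys k) (lams k)) \<and>
             (\<forall>k. \<forall>e\<in>?B. inner lam e \<noteq> 0 \<longrightarrow> inner lam e * inner (ys k - 0) e > 0))"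
      then obtain lam xs ys lams \<eta>s where l0: "lam \<noteq> 0" and D: "0 \<in> dir_coderiv ?\<Phi> (xb, 0) (u, 0) lam"
        and c1: "\<forall>k. ys k \<in> ?\<Phi> (xs k) \<and> xs k \<noteq> xb" and c2: "xs \<longlonglongrightarrow> xb" and c3: "ys \<longlonglongrightarrow> 0"
        and c4: "lams \<longlonglongrightarrow> lam" and c5: "\<eta>s \<longlonglongrightarrow> 0"
        and c6: "(\<lambda>k. (1 / norm (xs k - xb)) *\<^sub>R (xs k - xb)) \<longlonglongrightarrow> u"
        and c7: "(\<lambda>k. (1 / norm (xs k - xb)) *\<^sub>R (ys k - 0)) \<longlonglongrightarrow> 0"
        and c8: "\<forall>k. \<eta>s k \<in> reg_coderiv ?\<Phi> (xs k, ys k) (lams k)"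
        and c9: "\<forall>k. \<forall>e\<in>?B. inner lam e \<noteq> 0 \<longrightarrow> inner lam e * inner (ys k - 0) e > 0"
        by blast
      note T = transfer[OF l0 D c8 c4 c5]
      have c9': "\<forall>k. \<forall>e\<in>E1. inner (fst lam) e \<noteq> 0 \<longrightarrow> inner (fst lam) e * inner (fst (ys k)) e > 0"
      proof (intro allI ballI impI)
        fix k e assume e: "e \<in> E1" "inner (fst lam) e \<noteq> 0"
        have "(e, 0) \<in> ?B" using e by blast
        hence "inner lam (e, 0) \<noteq> 0 \<longrightarrow> inner lam (e, 0) * inner (ys k - 0) (e, 0) > 0"
          using c9 by blast
        thus "inner (fst lam) e * inner (fst (ys k)) e > 0"
          using e by (simp add: inner_Pair_0)
      qed
      have "?H"
        apply (rule exI[of _ "fst lam"])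
        apply (intro conjI)
        using T apply blast
        using T apply blast
        using T apply blast
        apply (rule exI[of _ xs], rule exI[of _ ys], rule exI[of _ "\<lambda>k. fst (lams k)"],
               rule exI[of _ "\<lambda>k. fst (\<eta>s k)"], rule exI[of _ "\<lambda>k. snd (lams k)"])
        using T c1 c2 c3 c6 c7 c9' by simp
      with nH show False by blast
    qed
  qed
qed

end
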